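(* Let $C$ be a circle in the plane, let $p,r$ be points on $C$, and let $q$ be a point in the open disk bounded by $C$. Suppose the ordered triple $(p,q,r)$ makes a clockwise (resp. counterclockwise) turn. Let $\gamma$ be a simple piecewise-linear path that starts at $p$, passes through $q$, ends at $r$, and meets $C$ only at $p$ and $r$. Then $\gamma$ has at least one clockwise (resp. counterclockwise) vertex, i.e. a vertex at which the path turns clockwise (resp. counterclockwise). *)

theory Defs
  imports "HOL-Analysis.Analysis"
begin

text \<open>Points of the plane are complex numbers. The orientation of an ordered
triple: positive = counterclockwise turn, negative = clockwise turn, zero = collinear.\<close>
definition orient :: "complex \<Rightarrow> complex \<Rightarrow> complex \<Rightarrow> real" where
  "orient a b c = Im (cnj (b - a) * (c - a))"

fun polypath :: "complex list \<Rightarrow> real \<Rightarrow> complex" where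
  "polypath [] = linepath 0 0"
| "polypath [a] = linepath a a"
| "polypath [a, b] = linepath a b"
| "polypath (a # b # c # rest) = linepath a b +++ polypath (b # c # rest)"

end

theory Submission
  imports Defs "HOL-Complex_Analysis.Complex_Analysis"
begin

fun segs :: "complex list \<Rightarrow> complex set" where
  "segs (a # b # rest) = closed_segment a b \<union> segs (b # rest)"
| "segs _ = {}"

fun wns :: "complex list \<Rightarrow> complex \<Rightarrow> complex" where
  "wns (a # b # rest) z = winding_number (linepath a b) z + wns (b # rest) z"
| "wns _ z = 0"

lemma pp_props: "vs \<noteq> [] \<Longrightarrow> path (polypath vs) \<and> pathstart (polypath vs) = hd vs \<and> pathfinish (polypath vs) = last vs"
  by (induction vs rule: polypath.induct) auto

lemma pp_image: "length vs \<ge> 2 \<Longrightarrow> path_image (polypath vs) = segs vs"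
proof (induction vs rule: polypath.induct)
  case (4 a b c rest)
  then show ?case using pp_props[of "b # c # rest"] by (simp add: path_image_join)
qed auto

lemma pp_wn: "length vs \<ge> 2 \<Longrightarrow> z \<notin> segs vs \<Longrightarrow> winding_number (polypath vs) z = wns vs z"
proof (induction vs rule: polypath.induct)
  case (4 a b c rest)
  then show ?case using pp_props[of "b # c # rest"] pp_image[of "b # c # rest"]
    by (simp add: winding_number_join)
qed auto

lemma segs_append: "segs (xs @ a # ys) = segs (xs @ [a]) \<union> segs (a # ys)"
proof (induction xs)
  case (Cons x xs)
  then show ?case by (cases xs) auto
qed auto

lemma wns_append: "wns (xs @ a # ys) z = wns (xs @ [a]) z + wns (a # ys) z"
proof (induction xs)
  case (Cons x xs)
  then show ?case by (cases xs) auto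
qed auto

lemma segs_closed: "closed (segs vs)"
  by (induction vs rule: segs.induct) auto

lemma segs_vertex: "length vs \<ge> 2 \<Longrightarrow> x \<in> set vs \<Longrightarrow> x \<in> segs vs"
proof (induction vs rule: segs.induct)
  case (1 a b rest)
  then show ?case by (cases rest) auto
qed auto

lemma arc_split: "arc (polypath (xs @ a # ys)) \<Longrightarrow> xs \<noteq> [] \<Longrightarrow> ys \<noteq> [] \<Longrightarrow>
   arc (polypath (xs @ [a])) \<and> arc (polypath (a # ys)) \<and> segs (xs @ [a]) \<inter> segs (a # ys) \<subseteq> {a}"
proof (induction xs)
  case Nil then show ?case by simp
next
  case (Cons x xs)
  show ?case
  proof (cases xs)
    case Nil
    obtain y ys' where ys: "ys = y # ys'" using Cons.prems by (cases ys) auto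
    have e: "polypath (x # a # ys) = linepath x a +++ polypath (a # ys)" using ys by simp
    show ?thesis using Cons.prems(1) unfolding Nil e
      using arc_join_eq[of "linepath x a" "polypath (a # ys)"] pp_props[of "a # ys"] pp_image[of "a # ys"] ys
      by auto
  next
    case (Cons y xs')
    have e: "polypath (x # y # xs' @ a # ys) = linepath x y +++ polypath (y # xs' @ a # ys)"
      using \<open>ys \<noteq> []\<close> by (cases xs') auto
    have e2: "polypath (x # y # xs' @ [a]) = linepath x y +++ polypath (y # xs' @ [a])"
      by (cases xs') auto
    have A: "arc (linepath x y)" "arc (polypath (y # xs' @ a # ys))"
      "closed_segment x y \<inter> segs (y # xs' @ a # ys) \<subseteq> {y}"
      using \<open>arc (polypath ((x # xs) @ a # ys))\<close> unfolding Cons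
      using arc_join_eq[of "linepath x y" "polypath (y # xs' @ a # ys)"] pp_props[of "y # xs' @ a # ys"]
        pp_image[of "y # xs' @ a # ys"] e by auto
    have IH: "arc (polypath (xs @ [a])) \<and> arc (polypath (a # ys)) \<and> segs (xs @ [a]) \<inter> segs (a # ys) \<subseteq> {a}"
      using Cons.IH A(2) \<open>ys \<noteq> []\<close> unfolding Cons by auto
    have sub: "segs (y # xs' @ [a]) \<subseteq> segs (y # xs' @ a # ys)"
      using segs_append[of "y # xs'" a ys] by auto
    have yin: "y \<in> segs (y # xs' @ [a])" by (rule segs_vertex) auto
    have "arc (polypath (x # y # xs' @ [a]))" unfolding e2
      using A IH sub pp_props[of "y # xs' @ [a]"] pp_image[of "y # xs' @ [a]"] Cons
      by (intro arc_join) auto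
    moreover have "segs (x # y # xs' @ [a]) \<inter> segs (a # ys) \<subseteq> {a}"
    proof -
      have "closed_segment x y \<inter> segs (a # ys) \<subseteq> {a}"
      proof
        fix t assume t: "t \<in> closed_segment x y \<inter> segs (a # ys)"
        then have "t \<in> segs (y # xs' @ a # ys)" using segs_append[of "y # xs'" a ys] by auto
        then have "t = y" using A(3) t by auto
        then show "t \<in> {a}" using IH yin t Cons by auto
      qed
      then show ?thesis using IH Cons by auto
    qed
    ultimately show ?thesis using IH Cons by simp
  qed
qed

lemma seg_param: "x \<in> closed_segment a b \<Longrightarrow> \<exists>t. 0 \<le> t \<and> t \<le> 1 \<and> x = a + of_real t * (b - a)"
  unfolding in_segment by (auto simp: scaleR_conv_of_real algebra_simps)

lemma seg_Im0:
  assumes "z \<in> closed_segment a b" shows "Im ((a - b) * cnj (a - z)) = 0"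
proof -
  obtain t where "z = a + of_real t * (b - a)" using seg_param[OF assms] by blast
  then have "a - z = of_real t * (a - b)" by (simp add: algebra_simps)
  then have "(a - b) * cnj (a - z) = (a - b) * (of_real t * cnj (a - b))" by simp
  also have "\<dots> = of_real t * ((a - b) * cnj (a - b))" by (simp add: mult_ac)
  also have "(a - b) * cnj (a - b) = of_real ((cmod (a - b))^2)"
    using complex_norm_square[of "a - b"] by simp
  finally show ?thesis by (simp flip: of_real_mult)
qed

lemma Im_rel:
  "Im (((A + a * d) - (A + b * d)) * cnj ((A + a * d) - (A + z * d))) = (cmod d)^2 * Im ((a - b) * cnj (a - z))"
proof -
  have "((A + a * d) - (A + b * d)) * cnj ((A + a * d) - (A + z * d)) = ((a - b) * cnj (a - z)) * (d * cnj d)"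
    by (simp add: algebra_simps)
  also have "d * cnj d = of_real ((cmod d)^2)" using complex_norm_square[of d] by simp
  finally show ?thesis by simp
qed

lemma notin_seg_rel:
  assumes "Im ((a - b) * cnj (a - z)) \<noteq> 0" "d \<noteq> 0"
  shows "A + z * d \<notin> closed_segment (A + a * d) (A + b * d)"
  using seg_Im0[of "A + z * d" "A + a * d" "A + b * d"] Im_rel[of A a d b z] assms by auto

lemma neg_rel:
  assumes "Im ((a - b) * cnj (a - z)) > 0" "d \<noteq> 0"
  shows "Re (winding_number (linepath (A + a * d) (A + b * d)) (A + z * d)) < 0"
  by (rule winding_number_linepath_neg_lt) (use Im_rel[of A a d b z] assms in auto)


lemma cross_geom:
  fixes A d :: complex and s e :: real
  assumes "d \<noteq> 0" "0 < s" "s < 1" "0 < e"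
  defines "z1 \<equiv> A + Complex s e * d" and "z2 \<equiv> A + Complex s (-e) * d" and "X \<equiv> A + Complex s (-3*e) * d"
  shows "closed_segment z1 z2 \<inter> (closed_segment A X \<union> closed_segment X (A + d)) = {}"
    and "z1 \<notin> closed_segment A (A + d)" "z2 \<notin> closed_segment A (A + d)"
    and "winding_number (linepath A (A+d)) z1 + winding_number (linepath (A+d) X) z1 - winding_number (linepath A X) z1 = 0"
    and "winding_number (linepath A (A+d)) z2 + winding_number (linepath (A+d) X) z2 - winding_number (linepath A X) z2 = -1"
proof -
  have eA: "A = A + 0 * d" and eB: "A + d = A + 1 * d" by simp_all
  show "closed_segment z1 z2 \<inter> (closed_segment A X \<union> closed_segment X (A + d)) = {}"
  proof (rule ccontr)
    assume "\<not> ?thesis"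
    then obtain x where x1: "x \<in> closed_segment z1 z2" and x2: "x \<in> closed_segment A X \<or> x \<in> closed_segment X (A + d)" by blast
    obtain l where l: "0 \<le> l" "l \<le> 1" "x = z1 + of_real l * (z2 - z1)" using seg_param[OF x1] by blast
    have xe: "x = A + Complex s (e - 2*l*e) * d"
      unfolding l z1_def z2_def by (simp add: complex_eq_iff algebra_simps)
    from x2 show False
    proof
      assume "x \<in> closed_segment A X"
      then obtain t where t: "0 \<le> t" "t \<le> 1" "x = A + of_real t * (X - A)" using seg_param by blast
      have "x = A + Complex (t * s) (-3*t*e) * d" unfolding t X_def by (simp add: complex_eq_iff algebra_simps)
      then have "Complex s (e - 2*l*e) = Complex (t * s) (-3*t*e)" using xe assms(1) by simp
      then have "s = t * s" "e - 2*l*e = -3*t*e" by auto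
      then have "t = 1" using assms(2) by simp
      then have "e * (4 - 2 * l) = 0" using \<open>e - 2*l*e = -3*t*e\<close> by (simp add: algebra_simps)
      then show False using assms(4) l by simp
    next
      assume "x \<in> closed_segment X (A + d)"
      then obtain t where t: "0 \<le> t" "t \<le> 1" "x = X + of_real t * (A + d - X)" using seg_param by blast
      have "x = A + Complex (s + t * (1-s)) (-3*e + 3*t*e) * d" unfolding t X_def by (simp add: complex_eq_iff algebra_simps)
      then have "Complex s (e - 2*l*e) = Complex (s + t * (1-s)) (-3*e + 3*t*e)" using xe assms(1) by simp
      then have "t * (1 - s) = 0" "e - 2*l*e = -3*e + 3*t*e" by auto
      then have "t = 0" using assms(3) by simp
      then have "e * (4 - 2 * l) = 0" using \<open>e - 2*l*e = -3*e + 3*t*e\<close> by (simp add: algebra_simps)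
      then show False using assms(4) l by simp
    qed
  qed
  note NS = notin_seg_rel[OF _ assms(1), of _ _ _ A]
  have z1AB: "z1 \<notin> closed_segment A (A + d)"
    using NS[of 0 1 "Complex s e"] assms unfolding z1_def by (simp add: eA[symmetric] eB[symmetric])
  have "Im ((0 - 1) * cnj (0 - Complex s (-e))) \<noteq> 0" using assms by simp
  then have "A + Complex s (-e) * d \<notin> closed_segment (A + 0 * d) (A + 1 * d)" by (rule NS)
  then have z2AB: "z2 \<notin> closed_segment A (A + d)" by (simp add: z2_def)
  show "z1 \<notin> closed_segment A (A + d)" "z2 \<notin> closed_segment A (A + d)" using z1AB z2AB by auto
  have z1BX: "z1 \<notin> closed_segment (A + d) X"
    using NS[of 1 "Complex s (-3*e)" "Complex s e"] assms unfolding z1_def X_def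
    by (simp add: eB[symmetric] algebra_simps)
  have z2BX: "z2 \<notin> closed_segment (A + d) X"
    using NS[of 1 "Complex s (-3*e)" "Complex s (-e)"] assms unfolding z2_def X_def
    by (simp add: eB[symmetric] algebra_simps)
  have z1XA: "z1 \<notin> closed_segment X A"
    using NS[of "Complex s (-3*e)" 0 "Complex s e"] assms unfolding z1_def X_def
    by (simp add: eA[symmetric] algebra_simps)
  have z2XA: "z2 \<notin> closed_segment X A"
    using NS[of "Complex s (-3*e)" 0 "Complex s (-e)"] assms unfolding z2_def X_def
    by (simp add: eA[symmetric] algebra_simps)
  define T where "T = linepath A (A+d) +++ linepath (A+d) X +++ linepath X A"
  have Tp: "path T" "pathfinish T = pathstart T" unfolding T_def by auto
  have wT: "winding_number T z = winding_number (linepath A (A+d)) z + winding_number (linepath (A+d) X) z - winding_number (linepath A X) z"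
    if "z \<notin> closed_segment A (A + d)" "z \<notin> closed_segment (A + d) X" "z \<notin> closed_segment X A" for z
  proof -
    have "winding_number (linepath X A) z = - winding_number (linepath A X) z"
      using winding_number_reversepath[of "linepath A X" z] that closed_segment_commute[of X A] by simp
    then show ?thesis unfolding T_def using that
      by (simp add: winding_number_join path_image_join)
  qed
  show "winding_number (linepath A (A+d)) z1 + winding_number (linepath (A+d) X) z1 - winding_number (linepath A X) z1 = 0"
  proof -
    define S where "S = {x. inner (\<i> * d) x \<le> inner (\<i> * d) A}"
    have cS: "convex S" unfolding S_def by (rule convex_halfspace_le)
    have iI: "inner (\<i> * d) x = Im (cnj d * x)" for x by (simp add: inner_complex_def algebra_simps)
    have key: "Im (cnj d * (A + z * d)) = Im (cnj d * A) + Im z * (cmod d)^2" for z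
    proof -
      have "cnj d * (A + z * d) = cnj d * A + z * (d * cnj d)" by (simp add: algebra_simps)
      also have "d * cnj d = of_real ((cmod d)^2)" using complex_norm_square[of d] by simp
      finally show ?thesis by simp
    qed
    have pos: "(cmod d)^2 > 0" using assms(1) by simp
    have SI: "A + z * d \<in> S \<longleftrightarrow> Im z \<le> 0" for z
    proof -
      have "A + z*d \<in> S \<longleftrightarrow> Im (cnj d * (A + z * d)) \<le> Im (cnj d * A)"
        unfolding S_def iI by (rule mem_Collect_eq)
      also have "\<dots> \<longleftrightarrow> Im z * (cmod d)^2 \<le> 0" unfolding key by linarith
      also have "\<dots> \<longleftrightarrow> Im z \<le> 0" using pos by (simp add: mult_le_0_iff)
      finally show ?thesis .
    qed
    have inS: "A \<in> S" "A + d \<in> S" "X \<in> S"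
      using SI[of 0] SI[of 1] SI[of "Complex s (-3*e)"] assms(4) unfolding X_def by auto
    have "path_image T \<subseteq> S" unfolding T_def
      using inS cS by (auto simp: path_image_join closed_segment_subset)
    moreover have "z1 \<notin> S" unfolding z1_def using SI[of "Complex s e"] assms(4) by simp
    ultimately have "winding_number T z1 = 0" using winding_number_zero_outside[OF Tp(1) cS Tp(2)] by blast
    then show ?thesis using wT[OF z1AB z1BX z1XA] by simp
  qed
  show "winding_number (linepath A (A+d)) z2 + winding_number (linepath (A+d) X) z2 - winding_number (linepath A X) z2 = -1"
  proof -
    have n1: "Re (winding_number (linepath A (A+d)) z2) < 0"
      using neg_rel[of 0 1 "Complex s (-e)" d A] assms unfolding z2_def by (simp add: eA[symmetric] eB[symmetric])
    have n2: "Re (winding_number (linepath (A+d) X) z2) < 0"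
      using neg_rel[of 1 "Complex s (-3*e)" "Complex s (-e)" d A] assms unfolding z2_def X_def
      by (simp add: eB[symmetric] algebra_simps)
    have n3: "Re (winding_number (linepath X A) z2) < 0"
      using neg_rel[of "Complex s (-3*e)" 0 "Complex s (-e)" d A] assms unfolding z2_def X_def
      by (simp add: eA[symmetric] algebra_simps)
    have h1: "\<bar>Re (winding_number (linepath A (A+d)) z2)\<bar> < 1/2" using winding_number_lt_half_linepath z2AB by blast
    have h2: "\<bar>Re (winding_number (linepath (A+d) X) z2)\<bar> < 1/2" using winding_number_lt_half_linepath z2BX by blast
    have h3: "\<bar>Re (winding_number (linepath X A) z2)\<bar> < 1/2" using winding_number_lt_half_linepath z2XA by blast
    have z2T: "z2 \<notin> path_image T" unfolding T_def using z2AB z2BX z2XA by (simp add: path_image_join)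
    have wTe: "winding_number T z2 = winding_number (linepath A (A+d)) z2 + winding_number (linepath (A+d) X) z2 + winding_number (linepath X A) z2"
      unfolding T_def using z2AB z2BX z2XA by (simp add: winding_number_join path_image_join)
    obtain k where k: "winding_number T z2 = of_int k"
      using integer_winding_number[OF Tp z2T] Ints_cases by blast
    have "real_of_int k < 0" "real_of_int k > -3/2"
      using wTe k n1 n2 n3 h1 h2 h3 by (auto simp: complex_eq_iff)
    then have "k = -1" by linarith
    then have "winding_number T z2 = -1" using k by simp
    then show ?thesis using wT[OF z2AB z2BX z2XA] by simp
  qed
qed

lemma crossing:
  fixes G G' :: "real \<Rightarrow> complex" and A d :: complex and s e :: real
  assumes "path G'" "pathfinish G' = pathstart G'"
    and "d \<noteq> 0" "0 < s" "s < 1" "0 < e"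
    and "path_image G' \<subseteq> Rest \<union> closed_segment A (A + Complex s (-3*e) * d) \<union> closed_segment (A + Complex s (-3*e) * d) (A + d)"
    and "closed_segment (A + Complex s e * d) (A + Complex s (-e) * d) \<inter> Rest = {}"
    and "\<And>z. z \<in> {A + Complex s e * d, A + Complex s (-e) * d} \<Longrightarrow>
        winding_number G z = winding_number G' z + winding_number (linepath A (A+d)) z
           + winding_number (linepath (A+d) (A + Complex s (-3*e) * d)) z - winding_number (linepath A (A + Complex s (-3*e) * d)) z"
  shows "winding_number G (A + Complex s e * d) = winding_number G (A + Complex s (-e) * d) + 1"
proof -
  define z1 where "z1 = A + Complex s e * d"
  define z2 where "z2 = A + Complex s (-e) * d"
  define X where "X = A + Complex s (-3*e) * d"
  note cg = cross_geom[OF assms(3-6), of A, folded z1_def z2_def X_def]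
  have disj: "closed_segment z1 z2 \<inter> path_image G' = {}"
    using assms(7,8) cg(1) unfolding z1_def[symmetric] z2_def[symmetric] X_def[symmetric] by blast
  have "winding_number G' z1 = winding_number G' z2"
    by (rule winding_number_eq[OF assms(1,2), of z1 "closed_segment z1 z2"]) (use disj in auto)
  moreover have "winding_number G z1 = winding_number G' z1 + (winding_number (linepath A (A+d)) z1
           + winding_number (linepath (A+d) X) z1 - winding_number (linepath A X) z1)"
    using assms(9)[of z1] unfolding z1_def[symmetric] z2_def[symmetric] X_def[symmetric] by (simp add: algebra_simps)
  moreover have "winding_number G z2 = winding_number G' z2 + (winding_number (linepath A (A+d)) z2
           + winding_number (linepath (A+d) X) z2 - winding_number (linepath A X) z2)"
    using assms(9)[of z2] unfolding z1_def[symmetric] z2_def[symmetric] X_def[symmetric] by (simp add: algebra_simps)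
  ultimately show ?thesis unfolding z1_def[symmetric] z2_def[symmetric] using cg(4,5) by simp
qed

lemma Re_center:
  assumes "0 \<in> sphere cc R" "1 \<in> sphere cc R" shows "Re cc = 1/2"
proof -
  have "(cmod cc)^2 = (cmod (cc - 1))^2" using assms by (simp add: dist_norm norm_minus_commute)
  then have "(Re cc)^2 + (Im cc)^2 = (Re cc - 1)^2 + (Im cc)^2" by (simp only: cmod_power2) simp
  then show ?thesis by (simp add: power2_eq_square algebra_simps)
qed

lemma K_facts:
  fixes cc :: complex and R :: real
  assumes "R > 0" "0 \<in> sphere cc R" "1 \<in> sphere cc R"
  defines "\<beta> \<equiv> \<bar>Im cc\<bar> + R + 1"
  defines "\<alpha> \<equiv> 2 * (\<beta> * \<bar>Im cc\<bar> + 1)"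
  defines "r2 \<equiv> 1 + Complex \<alpha> (-\<beta>)" and "p2 \<equiv> Complex (-\<alpha>) (-\<beta>)"
  shows "arc (polypath [1, r2, p2, 0])"
    and "segs [1, r2, p2, 0] = closed_segment 1 r2 \<union> closed_segment r2 p2 \<union> closed_segment p2 0"
    and "segs [1, r2, p2, 0] \<inter> cball cc R \<subseteq> {0, 1}"
    and "\<forall>x\<in>segs [1, r2, p2, 0]. -\<beta> \<le> Im x \<and> Im x \<le> 0"
    and "\<forall>x\<in>closed_segment 1 r2. 1 \<le> Re x"
    and "\<forall>x\<in>closed_segment p2 0. Re x \<le> 0"
    and "\<forall>x\<in>closed_segment r2 p2. Im x = -\<beta>"
    and "\<forall>x\<in>cball cc R. -\<beta> + 1/2 < Im x"
    and "\<beta> > 0" "\<alpha> > 0"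
proof -
  have Rc: "Re cc = 1/2" using Re_center assms(2,3) by blast
  have "R = cmod cc" using assms(2) by (simp add: dist_norm)
  then have "R^2 = (Re cc)^2 + (Im cc)^2" by (simp only: cmod_power2)
  then have R2: "R^2 = 1/4 + (Im cc)^2" using Rc by (simp add: power2_eq_square)
  have bpos: "\<beta> > 0" unfolding \<beta>_def using assms(1) by simp
  have lin1: "\<And>m a::real. 0 \<le> m \<Longrightarrow> a = 2 * m + 2 \<Longrightarrow> 0 < a" by linarith
  have apos: "\<alpha> > 0" 
    by (rule lin1[of "\<beta> * \<bar>Im cc\<bar>"]) (use bpos in \<open>simp_all add: \<alpha>_def algebra_simps\<close>)
  show "\<beta> > 0" "\<alpha> > 0" using bpos apos by auto
  show segsK: "segs [1, r2, p2, 0] = closed_segment 1 r2 \<union> closed_segment r2 p2 \<union> closed_segment p2 0" by auto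
  have S1: "\<exists>t. 0 \<le> t \<and> t \<le> 1 \<and> Re x = 1 + t * \<alpha> \<and> Im x = - (t * \<beta>)" if "x \<in> closed_segment 1 r2" for x
    using seg_param[OF that] unfolding r2_def by auto
  have S2: "Im x = -\<beta> \<and> -\<alpha> \<le> Re x \<and> Re x \<le> 1 + \<alpha>" if xin: "x \<in> closed_segment r2 p2" for x
  proof -
    obtain t where t: "0 \<le> t" "t \<le> 1" "x = r2 + of_real t * (p2 - r2)" using seg_param[OF xin] by blast
    have "Re x = 1 + \<alpha> - t * (1 + 2*\<alpha>)" "Im x = -\<beta>" unfolding t r2_def p2_def by (auto simp: algebra_simps)
    moreover have "t * (1 + 2*\<alpha>) \<le> 1 + 2*\<alpha>" using t apos by (simp add: mult_left_le_one_le)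
    moreover have "t * (1 + 2*\<alpha>) \<ge> 0" using t apos by simp
    ultimately show ?thesis by linarith
  qed
  have S3: "\<exists>t. 0 \<le> t \<and> t \<le> 1 \<and> Re x = - (t * \<alpha>) \<and> Im x = - (t * \<beta>)" if xin: "x \<in> closed_segment p2 0" for x
  proof -
    obtain t where t: "0 \<le> t" "t \<le> 1" "x = p2 + of_real t * (0 - p2)" using seg_param[OF xin] by blast
    have "Re x = - ((1 - t) * \<alpha>)" "Im x = - ((1 - t) * \<beta>)" unfolding t(3) p2_def by (auto simp: algebra_simps)
    then show ?thesis using t by (intro exI[of _ "1 - t"]) auto
  qed
  have RS1: "1 \<le> Re x" if xin: "x \<in> closed_segment 1 r2" for x
  proof -
    obtain t where "0 \<le> t" "Re x = 1 + t * \<alpha>" using S1[OF xin] by blast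
    moreover have "0 \<le> t * \<alpha>" using calculation(1) apos by simp
    ultimately show ?thesis by linarith
  qed
  have RS3: "Re x \<le> 0" if xin: "x \<in> closed_segment p2 0" for x
  proof -
    obtain t where "0 \<le> t" "Re x = - (t * \<alpha>)" using S3[OF xin] by blast
    moreover have "0 \<le> t * \<alpha>" using calculation(1) apos by simp
    ultimately show ?thesis by linarith
  qed
  show "\<forall>x\<in>closed_segment 1 r2. 1 \<le> Re x" using RS1 by blast
  show "\<forall>x\<in>closed_segment p2 0. Re x \<le> 0" using RS3 by blast
  show "\<forall>x\<in>closed_segment r2 p2. Im x = -\<beta>" using S2 by blast
  show "\<forall>x\<in>segs [1, r2, p2, 0]. -\<beta> \<le> Im x \<and> Im x \<le> 0"
  proof
    fix x assume "x \<in> segs [1, r2, p2, 0]"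
    then consider "x \<in> closed_segment 1 r2" | "x \<in> closed_segment r2 p2" | "x \<in> closed_segment p2 0"
      using segsK by blast
    then show "-\<beta> \<le> Im x \<and> Im x \<le> 0"
    proof cases
      case 1 then obtain t where "0 \<le> t" "t \<le> 1" "Im x = - (t * \<beta>)" using S1 by blast
      then show ?thesis using bpos by (simp add: mult_left_le_one_le)
    next
      case 2 then show ?thesis using S2 bpos by simp
    next
      case 3 then obtain t where "0 \<le> t" "t \<le> 1" "Im x = - (t * \<beta>)" using S3 by blast
      then show ?thesis using bpos by (simp add: mult_left_le_one_le)
    qed
  qed
  have cb: "-\<beta> + 1/2 < Im x" if "x \<in> cball cc R" for x
  proof -
    have "\<bar>Im cc - Im x\<bar> \<le> R" using that abs_Im_le_cmod[of "cc - x"] by (simp add: dist_norm)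
    then show ?thesis unfolding \<beta>_def by linarith
  qed
  show "\<forall>x\<in>cball cc R. -\<beta> + 1/2 < Im x" using cb by blast
  have key: "0 \<le> \<alpha> / 2 + \<beta> * Im cc"
  proof -
    have "\<beta> * (- Im cc) \<le> \<beta> * \<bar>Im cc\<bar>" using bpos by (intro mult_left_mono) auto
    then have h: "- (\<beta> * Im cc) \<le> \<beta> * \<bar>Im cc\<bar>" by simp
    have lin2: "\<And>m n a::real. - n \<le> m \<Longrightarrow> a = 2 * m + 2 \<Longrightarrow> 0 \<le> a / 2 + n" by linarith
    show ?thesis by (rule lin2[OF h]) (simp add: \<alpha>_def algebra_simps)
  qed
  have far: "R < dist cc x" if "t > 0" "Re x - 1/2 = 1/2 + t*\<alpha> \<or> Re x - 1/2 = -(1/2 + t*\<alpha>)"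
     "Im x - Im cc = Im cc + t*\<beta> \<or> Im x - Im cc = -(Im cc + t*\<beta>)" for x t
  proof -
    have e1: "(Re x - 1/2)^2 = (1/2 + t*\<alpha>)^2" using that(2) by (metis power2_minus)
    have e2: "(Im x - Im cc)^2 = (Im cc + t*\<beta>)^2" using that(3) by (metis power2_minus)
    have "(dist cc x)^2 = (Re x - Re cc)^2 + (Im x - Im cc)^2"
      by (simp only: dist_norm cmod_power2) (simp add: power2_eq_square algebra_simps)
    also have "\<dots> = R^2 + 2*t*(\<alpha>/2 + \<beta> * Im cc) + t*t*(\<alpha>*\<alpha> + \<beta>*\<beta>)"
      unfolding Rc e1 e2 R2 by (simp add: power2_eq_square algebra_simps)
    finally have d2: "(dist cc x)^2 = R^2 + 2*t*(\<alpha>/2 + \<beta> * Im cc) + t*t*(\<alpha>*\<alpha> + \<beta>*\<beta>)" .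
    have "0 \<le> 2*t*(\<alpha>/2 + \<beta> * Im cc)" using key that(1) by simp
    moreover have "0 < t*t*(\<alpha>*\<alpha> + \<beta>*\<beta>)" using that(1) apos by (simp add: add_pos_nonneg)
    ultimately have "R^2 < (dist cc x)^2" using d2 by linarith
    then show ?thesis by (rule power_less_imp_less_base) simp
  qed
  show "segs [1, r2, p2, 0] \<inter> cball cc R \<subseteq> {0, 1}"
  proof
    fix x assume x: "x \<in> segs [1, r2, p2, 0] \<inter> cball cc R"
    then have xc: "dist cc x \<le> R" by simp
    from x consider "x \<in> closed_segment 1 r2" | "x \<in> closed_segment r2 p2" | "x \<in> closed_segment p2 0"
      using segsK by blast
    then show "x \<in> {0, 1}"
    proof cases
      case 1 then obtain t where t: "0 \<le> t" "t \<le> 1" "Re x = 1 + t * \<alpha>" "Im x = - (t * \<beta>)" using S1 by blast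
      show ?thesis
      proof (cases "t = 0")
        case True then show ?thesis using t by (simp add: complex_eq_iff)
      next
        case False
        then have "R < dist cc x" using t by (intro far[of t]) auto
        then show ?thesis using xc by simp
      qed
    next
      case 2
      have "\<bar>Im cc - Im x\<bar> \<le> dist cc x" using abs_Im_le_cmod[of "cc - x"] by (simp add: dist_norm)
      then show ?thesis using xc S2[OF 2] unfolding \<beta>_def by linarith
    next
      case 3 then obtain t where t: "0 \<le> t" "t \<le> 1" "Re x = - (t * \<alpha>)" "Im x = - (t * \<beta>)" using S3 by blast
      show ?thesis
      proof (cases "t = 0")
        case True then show ?thesis using t by (simp add: complex_eq_iff)
      next
        case False
        then have "R < dist cc x" using t by (intro far[of t]) auto
        then show ?thesis using xc by simp
      qed
    qed
  qed
  have r2ne: "1 \<noteq> r2" "r2 \<noteq> p2" "p2 \<noteq> 0" using bpos apos by (auto simp: r2_def p2_def complex_eq_iff)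
  have i1: "closed_segment r2 p2 \<inter> closed_segment p2 0 \<subseteq> {p2}"
  proof
    fix x assume x: "x \<in> closed_segment r2 p2 \<inter> closed_segment p2 0"
    obtain t where t: "0 \<le> t" "t \<le> 1" "x = p2 + of_real t * (0 - p2)" using seg_param x by blast
    have "Im x = -\<beta>" using S2 x by blast
    then have "(1 - t) * \<beta> = \<beta>" using t(3) by (simp add: p2_def algebra_simps)
    then have "t = 0" using bpos by (simp add: algebra_simps)
    then show "x \<in> {p2}" using t by simp
  qed
  have i2: "closed_segment 1 r2 \<inter> (closed_segment r2 p2 \<union> closed_segment p2 0) \<subseteq> {r2}"
  proof
    fix x assume x: "x \<in> closed_segment 1 r2 \<inter> (closed_segment r2 p2 \<union> closed_segment p2 0)"
    obtain t where t: "0 \<le> t" "t \<le> 1" "x = 1 + of_real t * (r2 - 1)" using seg_param x by blast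
    have re: "1 \<le> Re x" using RS1 x by blast
    have "x \<notin> closed_segment p2 0" using RS3 re by force
    then have "Im x = -\<beta>" using S2 x by blast
    then have "t * \<beta> = \<beta>" using t(3) by (simp add: r2_def algebra_simps)
    then have "t = 1" using bpos by simp
    then show "x \<in> {r2}" using t by simp
  qed
  have "polypath [1, r2, p2, 0] = linepath 1 r2 +++ (linepath r2 p2 +++ linepath p2 0)" by simp
  moreover have "arc (linepath r2 p2 +++ linepath p2 0)"
    using r2ne i1 by (intro arc_join) auto
  moreover have "arc (linepath 1 r2 +++ (linepath r2 p2 +++ linepath p2 0))"
    using r2ne i1 i2 \<open>arc (linepath r2 p2 +++ linepath p2 0)\<close> by (intro arc_join) (auto simp: path_image_join)
  ultimately show "arc (polypath [1, r2, p2, 0])" by simp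
qed

lemma path_in_cball:
  fixes g :: "real \<Rightarrow> complex"
  assumes "arc g" "q \<in> path_image g" "q \<in> ball cc R"
    and "path_image g \<inter> sphere cc R = {pathstart g, pathfinish g}"
  shows "path_image g \<subseteq> cball cc R"
proof
  fix y assume y: "y \<in> path_image g"
  show "y \<in> cball cc R"
  proof (rule ccontr)
    assume ny: "y \<notin> cball cc R"
    obtain t0 where t0: "t0 \<in> {0..1}" "g t0 = q" using assms(2) by (auto simp: path_image_def)
    obtain t1 where t1: "t1 \<in> {0..1}" "g t1 = y" using y by (auto simp: path_image_def)
    define f where "f = (\<lambda>t. dist cc (g t))"
    have cont: "continuous_on {0..1} f" unfolding f_def
      using assms(1) by (intro continuous_intros) (auto simp: arc_def path_def)
    have f0: "f t0 < R" using t0 assms(3) by (simp add: f_def)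
    have f1: "f t1 > R" using t1 ny by (simp add: f_def)
    have inj: "inj_on g {0..1}" using assms(1) by (simp add: arc_def)
    obtain t where t: "min t0 t1 \<le> t" "t \<le> max t0 t1" "f t = R"
    proof (cases "t0 \<le> t1")
      case True
      have "continuous_on {t0..t1} f" by (rule continuous_on_subset[OF cont]) (use t0 t1 in auto)
      then obtain t where "t0 \<le> t" "t \<le> t1" "f t = R" using IVT'[of f t0 R t1] f0 f1 True by auto
      then show ?thesis using that True by auto
    next
      case False
      have "continuous_on {t1..t0} f" by (rule continuous_on_subset[OF cont]) (use t0 t1 in auto)
      then obtain t where "t1 \<le> t" "t \<le> t0" "f t = R" using IVT2'[of f t0 R t1] f0 f1 False by auto
      then show ?thesis using that False by auto
    qed
    have m1: "min t0 t1 \<ge> 0" "max t0 t1 \<le> 1" using t0 t1 by auto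
    have tI: "t \<in> {0..1}" unfolding atLeastAtMost_iff using t(1,2) m1 by linarith
    have "g t \<in> path_image g" using tI by (simp add: path_image_def)
    moreover have "g t \<in> sphere cc R" using t(3) by (simp add: f_def)
    ultimately have "g t \<in> {pathstart g, pathfinish g}" using assms(4) by blast
    then have "g t \<in> {g 0, g 1}" by (simp add: pathstart_def pathfinish_def)
    then have "t = 0 \<or> t = 1"
    proof
      assume "g t = g 0" then show ?thesis using inj_onD[OF inj _ tI] by simp
    next
      assume "g t \<in> {g 1}" then show ?thesis using inj_onD[OF inj _ tI] by simp
    qed
    then show False
    proof
      assume t00: "t = 0"
      have "min t0 t1 = 0" using t(1) t00 m1 by linarith
      then have "t0 = 0 \<or> t1 = 0" by (metis min_def)
      moreover have "f t0 \<noteq> f t" "f t1 \<noteq> f t" using t(3) f0 f1 by auto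
      ultimately show False using t00 by auto
    next
      assume t11: "t = 1"
      have "max t0 t1 = 1" using t(2) t11 m1 by linarith
      then have "t0 = 1 \<or> t1 = 1" by (metis max_def)
      moreover have "f t0 \<noteq> f t" "f t1 \<noteq> f t" using t(3) f0 f1 by auto
      ultimately show False using t11 by auto
    qed
  qed
qed

lemma seg_mem: "(0::real) \<le> t \<Longrightarrow> t \<le> 1 \<Longrightarrow> (a::complex) + of_real t * (b - a) \<in> closed_segment a b"
  unfolding in_segment by (rule exI[of _ t]) (auto simp: scaleR_conv_of_real algebra_simps)

lemma segs_bound:
  assumes "convex S" "set vs \<subseteq> S" shows "segs vs \<subseteq> S"
  using assms(2)
proof (induction vs rule: segs.induct)
  case (1 a b rest)
  then show ?case using closed_segment_subset[OF _ _ assms(1), of a b] by auto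
qed auto

lemma local_arc:
  assumes "arc (polypath (xs @ [a, b, c] @ ys))"
  shows "a \<noteq> b" "b \<noteq> c" "closed_segment a b \<inter> closed_segment b c \<subseteq> {b}"
    "b \<notin> segs (xs @ [a])" "b \<notin> segs (c # ys)"
proof -
  have sp: "arc (polypath ((xs @ [a]) @ [b])) \<and> arc (polypath (b # c # ys)) \<and> segs ((xs @ [a]) @ [b]) \<inter> segs (b # c # ys) \<subseteq> {b}"
    by (rule arc_split) (use assms in auto)
  have R: "b \<noteq> c \<and> b \<notin> segs (c # ys)"
  proof (cases ys)
    case Nil
    then have "arc (linepath b c)" using sp by simp
    then show ?thesis using arc_distinct_ends[of "linepath b c"] Nil by auto
  next
    case (Cons y ys')
    have "arc (linepath b c +++ polypath (c # ys))" using sp Cons by simp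
    then have "arc (linepath b c)" "closed_segment b c \<inter> segs (c # ys) \<subseteq> {c}"
      using arc_join_eq[of "linepath b c" "polypath (c # ys)"] pp_props[of "c # ys"] pp_image[of "c # ys"] Cons
      by auto
    then show ?thesis using arc_distinct_ends[of "linepath b c"] by auto
  qed
  have L: "a \<noteq> b \<and> b \<notin> segs (xs @ [a])"
  proof (cases xs)
    case Nil
    then have "arc (linepath a b)" using sp by simp
    then show ?thesis using arc_distinct_ends[of "linepath a b"] Nil by auto
  next
    case (Cons x xs')
    have sp2: "arc (polypath (xs @ [a])) \<and> arc (polypath (a # [b])) \<and> segs (xs @ [a]) \<inter> segs (a # [b]) \<subseteq> {a}"
      by (rule arc_split) (use sp Cons in auto)
    then have "a \<noteq> b" using arc_distinct_ends[of "linepath a b"] by auto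
    then show ?thesis using sp2 by auto
  qed
  have "closed_segment a b \<subseteq> segs ((xs @ [a]) @ [b])" using segs_append[of xs a "[b]"] by auto
  moreover have "closed_segment b c \<subseteq> segs (b # c # ys)" by simp
  ultimately have "closed_segment a b \<inter> closed_segment b c \<subseteq> {b}" using sp by blast
  then show "a \<noteq> b" "b \<noteq> c" "closed_segment a b \<inter> closed_segment b c \<subseteq> {b}"
    "b \<notin> segs (xs @ [a])" "b \<notin> segs (c # ys)" using L R by auto
qed

lemma no_backtrack:
  fixes a b c :: complex
  assumes "a \<noteq> b" "b \<noteq> c" "closed_segment a b \<inter> closed_segment b c \<subseteq> {b}"
    and "c - b = of_real \<mu> * (b - a)" "\<mu> < 0"
  shows False
proof -
  define t where "t = 1 / (1 - \<mu>)"
  have t: "0 < t" "t \<le> 1" using assms(5) by (auto simp: t_def field_simps)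
  have tm: "0 \<le> - (t * \<mu>)" "- (t * \<mu>) \<le> 1" using assms(5) by (auto simp: t_def field_simps)
  define x where "x = b + of_real t * (c - b)"
  have x1: "x \<in> closed_segment b c" unfolding x_def using t by (intro seg_mem) auto
  have "x = b + of_real (- (t * \<mu>)) * (a - b)" unfolding x_def assms(4) by (simp add: algebra_simps)
  moreover have "b + of_real (- (t * \<mu>)) * (a - b) \<in> closed_segment b a" by (rule seg_mem[OF tm])
  ultimately have "x \<in> closed_segment b a" by simp
  then have "x \<in> closed_segment a b" by (simp add: closed_segment_commute)
  then have "x = b" using x1 assms(3) by blast
  then show False using t assms(2) unfolding x_def by simp
qed

lemma top_geom:
  fixes F E :: complex
  assumes "F \<noteq> 0" "E \<noteq> 0" "0 \<le> Im F" "Im E \<le> 0" "Im F = 0 \<Longrightarrow> Re F < 0" "Im E = 0 \<Longrightarrow> 0 < Re E"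
    "0 \<le> Im (cnj F * E)" "\<And>\<mu>. E = of_real \<mu> * F \<Longrightarrow> \<mu> < 0 \<Longrightarrow> False"
  shows "Im E < 0" "0 < Im (cnj F * E)"
proof -
  have cr: "Im (cnj F * E) = Re F * Im E - Im F * Re E" by simp
  show IE: "Im E < 0"
  proof (rule ccontr)
    assume "\<not> Im E < 0"
    then have E0: "Im E = 0" using assms(4) by simp
    then have "0 < Re E" using assms(6) by simp
    then have "Im F * Re E \<le> 0" using assms(7) cr E0 by simp
    then have F0: "Im F = 0" using assms(3) \<open>0 < Re E\<close> by (simp add: mult_le_0_iff)
    then have "Re F < 0" using assms(5) by simp
    have "E = of_real (Re E / Re F) * F" using E0 F0 \<open>Re F < 0\<close> by (simp add: complex_eq_iff)
    moreover have "Re E / Re F < 0" using \<open>0 < Re E\<close> \<open>Re F < 0\<close> by (simp add: divide_pos_neg)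
    ultimately show False using assms(8) by blast
  qed
  show "0 < Im (cnj F * E)"
  proof (rule ccontr)
    assume "\<not> 0 < Im (cnj F * E)"
    then have c0: "Re F * Im E = Im F * Re E" using assms(7) cr by simp
    have "Im F \<noteq> 0"
    proof
      assume "Im F = 0"
      then have "Re F = 0" using c0 IE by simp
      then show False using \<open>Im F = 0\<close> assms(1) by (simp add: complex_eq_iff)
    qed
    then have Fp: "0 < Im F" using assms(3) by simp
    have "E = of_real (Im E / Im F) * F"
    proof (rule complex_eqI)
      show "Re E = Re (of_real (Im E / Im F) * F)" using c0 Fp by (simp add: field_simps)
      show "Im E = Im (of_real (Im E / Im F) * F)" using Fp by simp
    qed
    moreover have "Im E / Im F < 0" using IE Fp by (simp add: divide_neg_pos)
    ultimately show False using assms(8) by blast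
  qed
qed

lemma segs_swap:
  "segs (xs @ a # b # ys) = segs (xs @ [a]) \<union> closed_segment a b \<union> segs (b # ys)"
  "segs (xs @ a # X # b # ys) = segs (xs @ [a]) \<union> closed_segment a X \<union> closed_segment X b \<union> segs (b # ys)"
  using segs_append[of xs a "b # ys"] segs_append[of xs a "X # b # ys"] by auto

lemma wns_swap:
  assumes "z \<notin> closed_segment X b"
  shows "wns (xs @ a # b # ys) z = wns (xs @ a # X # b # ys) z + winding_number (linepath a b) z
     + winding_number (linepath b X) z - winding_number (linepath a X) z"
proof -
  have "winding_number (linepath X b) z = - winding_number (linepath b X) z"
    using winding_number_reversepath[of "linepath b X" z] assms closed_segment_commute[of X b] by simp
  then show ?thesis using wns_append[of xs a "b # ys" z] wns_append[of xs a "X # b # ys" z] by simp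
qed

lemma edge_cross:
  fixes G G' :: "real \<Rightarrow> complex" and W :: "complex \<Rightarrow> complex" and A B :: complex and s e :: real
  assumes "path G'" "pathfinish G' = pathstart G'"
    and "A \<noteq> B" "0 < s" "s < 1" "0 < e"
    and "segs (xs @ [A]) \<union> segs (B # ys) \<subseteq> Rest"
    and "path_image G' \<subseteq> Rest \<union> segs (xs @ A # (A + Complex s (-3*e) * (B - A)) # B # ys)"
    and "closed_segment (A + Complex s e * (B - A)) (A + Complex s (-e) * (B - A)) \<inter> Rest = {}"
    and "\<And>z. z \<notin> Rest \<Longrightarrow> z \<notin> closed_segment A B \<Longrightarrow> winding_number G z = W z + wns (xs @ A # B # ys) z"
    and "\<And>z. z \<notin> Rest \<Longrightarrow> z \<notin> closed_segment A (A + Complex s (-3*e) * (B - A))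
      \<Longrightarrow> z \<notin> closed_segment (A + Complex s (-3*e) * (B - A)) B
      \<Longrightarrow> winding_number G' z = W z + wns (xs @ A # (A + Complex s (-3*e) * (B - A)) # B # ys) z"
  shows "winding_number G (A + Complex s e * (B - A)) = winding_number G (A + Complex s (-e) * (B - A)) + 1"
    "A + Complex s e * (B - A) \<notin> Rest \<union> closed_segment A B"
    "A + Complex s (-e) * (B - A) \<notin> Rest \<union> closed_segment A B"
proof -
  define d where "d = B - A"
  have d0: "d \<noteq> 0" "A + d = B" using assms(3) by (auto simp: d_def)
  define z1 where "z1 = A + Complex s e * d"
  define z2 where "z2 = A + Complex s (-e) * d"
  define X where "X = A + Complex s (-3*e) * d"
  note cg = cross_geom[OF d0(1) assms(4-6), of A, folded z1_def z2_def X_def, unfolded d0(2)]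
  have zR: "z \<notin> Rest" if "z \<in> {z1, z2}" for z using assms(9) that unfolding d_def[symmetric] z1_def[symmetric] z2_def[symmetric] by auto
  have zX: "z \<notin> closed_segment A X \<and> z \<notin> closed_segment X B" if "z \<in> {z1, z2}" for z
    using cg(1) that by auto
  have zAB: "z \<notin> closed_segment A B" if "z \<in> {z1, z2}" for z
    using cg(2,3) that by auto
  have main: "winding_number G z1 = winding_number G z2 + 1"
    unfolding z1_def z2_def
  proof (rule crossing[OF assms(1,2) d0(1) assms(4-6), of Rest])
    show "path_image G' \<subseteq> Rest \<union> closed_segment A (A + Complex s (-3*e) * d) \<union> closed_segment (A + Complex s (-3*e) * d) (A + d)"
      using assms(7,8) segs_swap(2)[of xs A "A + Complex s (-3*e) * d" B ys] unfolding d_def[symmetric] d0(2) by auto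
    show "closed_segment (A + Complex s e * d) (A + Complex s (-e) * d) \<inter> Rest = {}"
      using assms(9) unfolding d_def[symmetric] .
    fix z assume z: "z \<in> {A + Complex s e * d, A + Complex s (-e) * d}"
    then have z': "z \<in> {z1, z2}" unfolding z1_def z2_def .
    have "winding_number G z = W z + wns (xs @ A # B # ys) z"
      using assms(10) zR[OF z'] zAB[OF z'] by blast
    moreover have "winding_number G' z = W z + wns (xs @ A # X # B # ys) z"
      using assms(11) zR[OF z'] zX[OF z'] unfolding X_def d_def by blast
    moreover have "wns (xs @ A # B # ys) z = wns (xs @ A # X # B # ys) z + winding_number (linepath A B) z
     + winding_number (linepath B X) z - winding_number (linepath A X) z"
      using wns_swap zX[OF z'] by blast
    ultimately show "winding_number G z = winding_number G' z + winding_number (linepath A (A + d)) z +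
         winding_number (linepath (A + d) (A + Complex s (- 3 * e) * d)) z -
         winding_number (linepath A (A + Complex s (- 3 * e) * d)) z"
      unfolding d0(2) X_def[symmetric] by simp
  qed
  show "winding_number G (A + Complex s e * (B - A)) = winding_number G (A + Complex s (-e) * (B - A)) + 1"
    using main unfolding z1_def z2_def d_def .
  show "A + Complex s e * (B - A) \<notin> Rest \<union> closed_segment A B"
    using zR[of z1] zAB[of z1] unfolding z1_def d_def by auto
  show "A + Complex s (-e) * (B - A) \<notin> Rest \<union> closed_segment A B"
    using zR[of z2] zAB[of z2] unfolding z2_def d_def by auto
qed

lemma main_norm:
  fixes cc q :: complex and R :: real and vs :: "complex list"
  assumes "R > 0" "0 \<in> sphere cc R" "1 \<in> sphere cc R" "q \<in> ball cc R"
    and "length vs \<ge> 2" "hd vs = 0" "last vs = 1"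
    and "arc (polypath vs)" "q \<in> path_image (polypath vs)"
    and "path_image (polypath vs) \<inter> sphere cc R = {0, 1}"
    and "Im q > 0"
    and turns: "\<And>i. 0 < i \<Longrightarrow> i < length vs - 1 \<Longrightarrow> orient (vs ! (i - 1)) (vs ! i) (vs ! (i + 1)) \<ge> 0"
  shows False
proof -
  define \<gamma> where "\<gamma> = polypath vs"
  have vsne: "vs \<noteq> []" using assms(5) by auto
  have \<gamma>p: "path \<gamma>" "pathstart \<gamma> = 0" "pathfinish \<gamma> = 1"
    using pp_props[OF vsne] assms(6,7) unfolding \<gamma>_def by auto
  have img\<gamma>: "path_image \<gamma> = segs vs" unfolding \<gamma>_def using pp_image assms(5) by blast
  have \<gamma>ball: "segs vs \<subseteq> cball cc R"
    using path_in_cball[of \<gamma> q cc R] assms(8,9,4,10) \<gamma>p img\<gamma> unfolding \<gamma>_def by auto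
  define \<beta> where "\<beta> \<equiv> \<bar>Im cc\<bar> + R + 1"
  define \<alpha> where "\<alpha> \<equiv> 2 * (\<beta> * \<bar>Im cc\<bar> + 1)"
  define r2 where "r2 \<equiv> 1 + Complex \<alpha> (-\<beta>)"
  define p2 where "p2 \<equiv> Complex (-\<alpha>) (-\<beta>)"
  note KF = K_facts[OF assms(1-3), folded \<beta>_def, folded \<alpha>_def, folded r2_def p2_def]
  define ks where "ks = [1, r2, p2, 0]"
  define K where "K = polypath ks"
  have Kp: "path K" "pathstart K = 1" "pathfinish K = 0" "arc K" "path_image K = segs ks"
    unfolding K_def ks_def using KF(1) pp_props[of "[1, r2, p2, 0]"] pp_image[of "[1, r2, p2, 0]"] by auto
  define \<Gamma> where "\<Gamma> = \<gamma> +++ K"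
  have \<Gamma>p: "path \<Gamma>" "pathfinish \<Gamma> = pathstart \<Gamma>" unfolding \<Gamma>_def using \<gamma>p Kp by auto
  have img\<Gamma>: "path_image \<Gamma> = segs vs \<union> segs ks" unfolding \<Gamma>_def using \<gamma>p Kp img\<gamma> by (simp add: path_image_join)
  have \<gamma>K: "segs vs \<inter> segs ks \<subseteq> {0, 1}" using KF(3) \<gamma>ball unfolding ks_def by blast
  have simple: "simple_path \<Gamma>" unfolding \<Gamma>_def
    by (rule simple_path_join_loop) (use assms(8) Kp \<gamma>p img\<gamma> \<gamma>K in \<open>auto simp: \<gamma>_def\<close>)
  have wn\<Gamma>: "winding_number \<Gamma> z = wns vs z + wns ks z" if "z \<notin> segs vs \<union> segs ks" for z
  proof -
    have "winding_number \<Gamma> z = winding_number \<gamma> z + winding_number K z"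
      unfolding \<Gamma>_def using that \<gamma>p Kp img\<gamma> by (intro winding_number_join) auto
    then show ?thesis using that pp_wn[of vs z] pp_wn[of ks z] assms(5) unfolding \<gamma>_def K_def ks_def by auto
  qed
  have top: "\<exists>z. z \<notin> path_image \<Gamma> \<and> winding_number \<Gamma> z = 1"
  proof -
    define M where "M = Max (Im ` set vs)"
    have fin: "finite (set vs)" "set vs \<noteq> {}" using vsne by auto
    have allM: "Im x \<le> M" if "x \<in> set vs" for x unfolding M_def using fin that by simp
    have segM: "segs vs \<subseteq> {x. Im x \<le> M}" by (rule segs_bound) (use allM convex_halfspace_Im_le in auto)
    have qs: "q \<in> segs vs" using assms(9) img\<gamma> unfolding \<gamma>_def by simp
    have Mpos: "M > 0" using segM qs assms(11) by force
    define S where "S = {x \<in> set vs. Im x = M}"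
    have "M \<in> Im ` set vs" unfolding M_def using fin by simp
    then have Sne: "S \<noteq> {}" unfolding S_def by auto
    have Sfin: "finite S" unfolding S_def using fin by simp
    obtain b where bS: "b \<in> S" and bmin: "\<And>y. y \<in> S \<Longrightarrow> Re b \<le> Re y"
    proof -
      have "Min (Re ` S) \<in> Re ` S" using Sfin Sne by simp
      then obtain b where "b \<in> S" "Re b = Min (Re ` S)" by auto
      moreover have "\<And>y. y \<in> S \<Longrightarrow> Min (Re ` S) \<le> Re y" using Sfin by simp
      ultimately show ?thesis using that by auto
    qed
    have bM: "Im b = M" "b \<in> set vs" using bS unfolding S_def by auto
    obtain k where k: "k < length vs" "vs ! k = b" using bM(2) by (auto simp: in_set_conv_nth)
    have "vs ! 0 = 0" using assms(6) vsne by (simp add: hd_conv_nth)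
    then have k0: "k \<noteq> 0" using k bM Mpos by (metis zero_complex.sel(2) less_irrefl)
    have "vs ! (length vs - 1) = 1" using assms(7) vsne by (simp add: last_conv_nth)
    then have kn: "k \<noteq> length vs - 1" using k bM Mpos by (metis one_complex.sel(2) less_irrefl)
    define vp where "vp = vs ! (k - 1)"
    define vn where "vn = vs ! (k + 1)"
    define xs where "xs = take (k - 1) vs"
    define ys where "ys = drop (k + 2) vs"
    have "drop (k - 1) vs = vp # b # vn # ys"
    proof -
      have "drop (k - 1) vs = vs ! (k - 1) # drop k vs" using Cons_nth_drop_Suc[of "k - 1" vs] k k0 by simp
      also have "drop k vs = vs ! k # drop (Suc k) vs" using Cons_nth_drop_Suc[of k vs] k by simp
      also have "drop (Suc k) vs = vs ! (Suc k) # drop (Suc (Suc k)) vs" using Cons_nth_drop_Suc[of "Suc k" vs] k kn by simp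
      finally show ?thesis unfolding vp_def vn_def ys_def using k by simp
    qed
    then have vsdec: "vs = xs @ [vp, b, vn] @ ys" unfolding xs_def by (metis append_Cons append_Nil append_take_drop_id)
    have vsdec': "vs = (xs @ [vp]) @ b # vn # ys" using vsdec by simp
    have turn: "0 \<le> orient vp b vn" using turns[of k] k0 kn k unfolding vp_def vn_def by simp
    have LA: "vp \<noteq> b" "b \<noteq> vn" "closed_segment vp b \<inter> closed_segment b vn \<subseteq> {b}"
      "b \<notin> segs (xs @ [vp])" "b \<notin> segs (vn # ys)"
      using local_arc[of xs vp b vn ys] assms(8) vsdec by auto
    have vin: "vp \<in> set vs" "vn \<in> set vs" unfolding vp_def vn_def using k kn by auto
    define F where "F = b - vp"
    define E where "E = vn - b"
    have FE0: "F \<noteq> 0" "E \<noteq> 0" using LA unfolding F_def E_def by auto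
    have cr: "Im (cnj F * E) = orient vp b vn" unfolding orient_def F_def E_def by (simp add: algebra_simps)
    have IF: "0 \<le> Im F" using allM[OF vin(1)] bM unfolding F_def by simp
    have IE: "Im E \<le> 0" using allM[OF vin(2)] bM unfolding E_def by simp
    have RF: "Re F < 0" if "Im F = 0"
    proof -
      have "vp \<in> S" using that vin bM unfolding S_def F_def by simp
      then have "Re b \<le> Re vp" by (rule bmin)
      moreover have "Re vp \<noteq> Re b" using LA(1) that unfolding F_def by (auto simp: complex_eq_iff)
      ultimately show ?thesis unfolding F_def by simp
    qed
    have RE: "0 < Re E" if "Im E = 0"
    proof -
      have "vn \<in> S" using that vin bM unfolding S_def E_def by simp
      then have "Re b \<le> Re vn" by (rule bmin)
      moreover have "Re vn \<noteq> Re b" using LA(2) that unfolding E_def by (auto simp: complex_eq_iff)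
      ultimately show ?thesis unfolding E_def by simp
    qed
    have nb: "\<And>\<mu>. E = of_real \<mu> * F \<Longrightarrow> \<mu> < 0 \<Longrightarrow> False"
    proof -
      fix \<mu> :: real assume a: "E = of_real \<mu> * F" "\<mu> < 0"
      then have "vn - b = of_real \<mu> * (b - vp)" using E_def F_def by simp
      then show False using no_backtrack[OF LA(1-3)] a(2) by blast
    qed
    have turn': "0 \<le> Im (cnj F * E)" using turn cr by simp
    have TG1: "Im E < 0" by (rule top_geom(1)[OF FE0 IF IE RF RE turn']) (use nb in blast)+
    have TG2: "0 < Im (cnj F * E)" by (rule top_geom(2)[OF FE0 IF IE RF RE turn']) (use nb in blast)+
    define Rest0 where "Rest0 = segs (xs @ [vp]) \<union> segs (vn # ys) \<union> segs ks"
    have bvs: "b \<in> segs vs" using segs_vertex[OF assms(5) bM(2)] .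
    have "b \<notin> segs ks"
    proof
      assume "b \<in> segs ks"
      then have "b \<in> {0, 1}" using KF(3) bvs \<gamma>ball unfolding ks_def by blast
      then show False using bM Mpos by auto
    qed
    then have bR0: "b \<notin> Rest0" using LA(4,5) unfolding Rest0_def by blast
    have "closed Rest0" unfolding Rest0_def by (intro closed_Un segs_closed)
    then obtain \<rho> where \<rho>: "\<rho> > 0" "ball b \<rho> \<subseteq> - Rest0"
      using bR0 open_contains_ball[of "- Rest0"] by (auto simp: open_Compl)
    define Rest where "Rest = Rest0 \<union> closed_segment vp b"
    have segsvs: "segs vs = segs (xs @ [vp]) \<union> closed_segment vp b \<union> closed_segment b vn \<union> segs (vn # ys)"
      using segs_swap(1)[of "xs @ [vp]" b vn ys] segs_append[of xs vp "[b]"] vsdec' by auto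
    define \<kappa> where "\<kappa> = Im (cnj F * E)"
    define D where "D = Re (cnj F * E)"
    have \<kappa>p: "\<kappa> > 0" using TG2 unfolding \<kappa>_def .
    have Ep: "cmod E > 0" using FE0 by simp
    define s where "s = min (1/2) (\<rho> / (4 * cmod E))"
    define e where "e = s * \<kappa> / (2 * (\<bar>D\<bar> + \<kappa>))"
    have sp: "0 < s" "s < 1" "s * cmod E \<le> \<rho> / 4" unfolding s_def using \<rho> Ep
      by (auto simp: min_def field_simps)
    have ep: "0 < e" unfolding e_def using sp \<kappa>p by (simp add: add_nonneg_pos)
    have es: "e \<le> s / 2"
    proof -
      have "\<kappa> / (2 * (\<bar>D\<bar> + \<kappa>)) \<le> 1/2" using \<kappa>p by (simp add: field_simps)
      then have "s * (\<kappa> / (2 * (\<bar>D\<bar> + \<kappa>))) \<le> s * (1/2)" using sp by (intro mult_left_mono) auto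
      then show ?thesis unfolding e_def by simp
    qed
    have eD: "e * \<bar>D\<bar> < s * \<kappa>"
    proof -
      have "\<bar>D\<bar> / (2 * (\<bar>D\<bar> + \<kappa>)) \<le> 1/2" using \<kappa>p by (simp add: field_simps)
      then have "(s * \<kappa>) * (\<bar>D\<bar> / (2 * (\<bar>D\<bar> + \<kappa>))) \<le> (s * \<kappa>) * (1/2)"
        using sp \<kappa>p by (intro mult_left_mono) auto
      moreover have "e * \<bar>D\<bar> = (s * \<kappa>) * (\<bar>D\<bar> / (2 * (\<bar>D\<bar> + \<kappa>)))" unfolding e_def by simp
      moreover have "0 < s * \<kappa>" using sp \<kappa>p by simp
      ultimately show ?thesis by linarith
    qed
    have bE: "b + E = vn" unfolding E_def by simp
    define z1 where "z1 = b + Complex s e * E"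
    define z2 where "z2 = b + Complex s (-e) * E"
    define X where "X = b + Complex s (-3*e) * E"
    have segz: "\<exists>l. \<bar>l\<bar> \<le> e \<and> x = b + Complex s l * E" if xin: "x \<in> closed_segment z1 z2" for x
    proof -
      obtain t where t: "0 \<le> t" "t \<le> 1" "x = z1 + of_real t * (z2 - z1)" using seg_param[OF xin] by blast
      have "x = b + Complex s (e - 2 * t * e) * E" unfolding t(3) z1_def z2_def by (simp add: complex_eq_iff algebra_simps)
      moreover have "\<bar>e - 2 * t * e\<bar> \<le> e"
      proof -
        have "0 \<le> t * e" "t * e \<le> e" using t ep by (auto simp: mult_left_le_one_le)
        then show ?thesis by linarith
      qed
      ultimately show ?thesis by blast
    qed
    have inball: "x \<in> ball b \<rho>" if xin: "x \<in> closed_segment z1 z2" for x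
    proof -
      obtain l where l: "\<bar>l\<bar> \<le> e" "x = b + Complex s l * E" using segz[OF xin] by blast
      have "cmod (Complex s l) \<le> \<bar>s\<bar> + \<bar>l\<bar>" using cmod_le[of "Complex s l"] by simp
      also have "\<dots> \<le> 3/2 * s" using l(1) es sp by simp
      finally have "cmod (Complex s l) * cmod E \<le> 3/2 * s * cmod E" using Ep by (simp add: mult_right_mono)
      also have "\<dots> < \<rho>" using sp \<rho> by simp
      finally show ?thesis using l(2) by (simp add: dist_norm norm_mult)
    qed
    have notvpb: "x \<notin> closed_segment vp b" if xin: "x \<in> closed_segment z1 z2" for x
    proof
      assume xv: "x \<in> closed_segment vp b"
      obtain l where l: "\<bar>l\<bar> \<le> e" "x = b + Complex s l * E" using segz[OF xin] by blast
      obtain t where t: "0 \<le> t" "t \<le> 1" "x = vp + of_real t * (b - vp)" using seg_param[OF xv] by blast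
      have "Complex s l * E = - (of_real (1 - t) * F)" using l(2) t(3) unfolding F_def by (simp add: algebra_simps)
      then have "Complex s l * (cnj F * E) = - (of_real (1 - t) * (cnj F * F))" by (metis mult.left_commute mult_minus_right)
      also have "cnj F * F = of_real ((cmod F)^2)" using complex_norm_square[of F] by (simp add: mult.commute)
      finally have "Im (Complex s l * (cnj F * E)) = 0" by (simp flip: of_real_mult)
      then have "s * \<kappa> + l * D = 0" unfolding \<kappa>_def D_def by (simp add: algebra_simps)
      then have "s * \<kappa> = - (l * D)" by linarith
      also have "\<dots> \<le> \<bar>l * D\<bar>" by (rule abs_ge_minus_self)
      finally have "s * \<kappa> \<le> \<bar>l\<bar> * \<bar>D\<bar>" by (simp add: abs_mult)
      also have "\<dots> \<le> e * \<bar>D\<bar>" using l(1) by (simp add: mult_right_mono)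
      finally show False using eD by simp
    qed
    have h3: "closed_segment z1 z2 \<inter> Rest = {}"
      using inball notvpb \<rho>(2) unfolding Rest_def by blast
    define vs' where "vs' = (xs @ [vp]) @ b # X # vn # ys"
    define \<Gamma>' where "\<Gamma>' = polypath vs' +++ K"
    have vs'ne: "vs' \<noteq> []" "length vs' \<ge> 2" unfolding vs'_def by auto
    have lv: "last vs' = 1" using assms(7) vsdec' unfolding vs'_def by (cases ys) auto
    have hv: "hd vs' = 0" using assms(6) vsdec' unfolding vs'_def by (cases xs) auto
    have pvs': "pathfinish (polypath vs') = 1" using pp_props[OF vs'ne(1)] lv by simp
    have \<Gamma>'p: "path \<Gamma>'" "pathfinish \<Gamma>' = pathstart \<Gamma>'" "path_image \<Gamma>' = segs vs' \<union> segs ks"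
    proof -
      show "path \<Gamma>'" "pathfinish \<Gamma>' = pathstart \<Gamma>'" "path_image \<Gamma>' = segs vs' \<union> segs ks"
        using pp_props[OF vs'ne(1)] pp_image[OF vs'ne(2)] Kp lv hv unfolding \<Gamma>'_def
        by (auto simp: path_image_join)
    qed
    have h1: "segs ((xs @ [vp]) @ [b]) \<union> segs (vn # ys) \<subseteq> Rest"
      using segs_append[of xs vp "[b]"] unfolding Rest_def Rest0_def by auto
    have h2: "path_image \<Gamma>' \<subseteq> Rest \<union> segs ((xs @ [vp]) @ b # (b + Complex s (-3*e) * (vn - b)) # vn # ys)"
      unfolding \<Gamma>'p(3) vs'_def X_def E_def Rest_def Rest0_def by auto
    have h3': "closed_segment (b + Complex s e * (vn - b)) (b + Complex s (-e) * (vn - b)) \<inter> Rest = {}"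
      using h3 unfolding z1_def z2_def E_def .
    have h4: "winding_number \<Gamma> z = wns ks z + wns ((xs @ [vp]) @ b # vn # ys) z"
      if z: "z \<notin> Rest" "z \<notin> closed_segment b vn" for z
    proof -
      have "z \<notin> segs vs \<union> segs ks" using z segsvs unfolding Rest_def Rest0_def by auto
      then show ?thesis using wn\<Gamma> vsdec' by (metis add.commute)
    qed
    have h5: "winding_number \<Gamma>' z = wns ks z + wns ((xs @ [vp]) @ b # (b + Complex s (-3*e) * (vn - b)) # vn # ys) z"
      if z: "z \<notin> Rest" "z \<notin> closed_segment b (b + Complex s (-3*e) * (vn - b))"
        "z \<notin> closed_segment (b + Complex s (-3*e) * (vn - b)) vn" for z
    proof -
      have zn: "z \<notin> segs vs'" "z \<notin> segs ks"
        using z segs_swap(2)[of "xs @ [vp]" b X vn ys] segs_append[of xs vp "[b]"]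
        unfolding Rest_def Rest0_def vs'_def X_def E_def by auto
      have "winding_number \<Gamma>' z = winding_number (polypath vs') z + winding_number K z"
        unfolding \<Gamma>'_def using zn pp_props[OF vs'ne(1)] pp_image[OF vs'ne(2)] Kp pvs'
        by (intro winding_number_join) auto
      then show ?thesis
        using pp_wn[OF vs'ne(2) zn(1)] pp_wn[of ks z] zn unfolding K_def ks_def vs'_def X_def E_def
        by (simp add: add.commute)
    qed
    note ec = edge_cross[OF \<Gamma>'p(1,2) LA(2) sp(1,2) ep h1 h2 h3' h4 h5, folded E_def, folded z1_def z2_def]
    define U where "U = ball b \<rho> \<inter> {x. Im (cnj E * (x - b)) < 0}"
    have hs: "{x. Im (cnj E * (x - b)) < 0} = {x. inner (\<i> * E) x < inner (\<i> * E) b}"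
      by (auto simp: inner_complex_def algebra_simps)
    have cU: "convex U" unfolding U_def hs by (intro convex_Int convex_ball convex_halfspace_lt)
    have UG: "U \<inter> path_image \<Gamma> = {}"
    proof (rule ccontr)
      assume "U \<inter> path_image \<Gamma> \<noteq> {}"
      then obtain x where xU: "x \<in> U" and xG: "x \<in> segs vs \<union> segs ks" using img\<Gamma> by blast
      have "x \<notin> Rest0" using xU \<rho>(2) unfolding U_def by blast
      then have disj: "x \<in> closed_segment vp b \<or> x \<in> closed_segment b vn" using xG segsvs unfolding Rest0_def by blast
      have neg: "Im (cnj E * (x - b)) < 0" using xU unfolding U_def by simp
      from disj show False
      proof
        assume xv: "x \<in> closed_segment vp b"
        obtain t where t: "0 \<le> t" "t \<le> 1" "x = vp + of_real t * (b - vp)" using seg_param[OF xv] by blast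
        have "Im (cnj E * (x - b)) = (1 - t) * \<kappa>" unfolding t(3) \<kappa>_def F_def E_def by (simp add: algebra_simps)
        moreover have "0 \<le> (1 - t) * \<kappa>" using t \<kappa>p by simp
        ultimately show False using neg by simp
      next
        assume xv: "x \<in> closed_segment b vn"
        obtain t where t: "0 \<le> t" "t \<le> 1" "x = b + of_real t * (vn - b)" using seg_param[OF xv] by blast
        have "Im (cnj E * (x - b)) = 0" unfolding t(3) E_def by (simp add: algebra_simps)
        then show False using neg by simp
      qed
    qed
    have z2U: "z2 \<in> U"
    proof -
      have "z2 \<in> ball b \<rho>" using inball[of z2] by simp
      moreover have "Im (cnj E * (z2 - b)) = - e * ((Re E)^2 + (Im E)^2)"
        unfolding z2_def by (simp add: algebra_simps power2_eq_square)
      moreover have "(Re E)^2 + (Im E)^2 > 0" using FE0(2) by (simp add: complex_neq_0)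
      moreover have "0 < e * ((Re E)^2 + (Im E)^2)" using ep calculation(3) by (rule mult_pos_pos)
      ultimately have "z2 \<in> ball b \<rho>" "Im (cnj E * (z2 - b)) < 0" by linarith+
      then show ?thesis unfolding U_def by blast
    qed
    define lam0 where "lam0 = (\<bar>Re E\<bar> + 1) / (- Im E)"
    define \<tau> where "\<tau> = \<rho> / (2 * (lam0 + 1))"
    define zs where "zs = b + of_real \<tau> * Complex (-lam0) 1"
    have l0: "lam0 > 0" "lam0 * Im E = - (\<bar>Re E\<bar> + 1)" unfolding lam0_def using TG1 by (auto simp: field_simps)
    have tp: "\<tau> > 0" "\<tau> * (lam0 + 1) = \<rho> / 2"
    proof -
      have "lam0 + 1 > 0" using l0 by simp
      moreover have g: "\<And>w r::real. w > 0 \<Longrightarrow> r / (2*w) * w = r/2" by (simp add: field_simps)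
      ultimately show "\<tau> * (lam0 + 1) = \<rho> / 2" unfolding \<tau>_def by blast
      show "\<tau> > 0" unfolding \<tau>_def using \<rho> \<open>lam0 + 1 > 0\<close> by simp
    qed
    have zsU: "zs \<in> U"
    proof -
      have "cmod (Complex (-lam0) 1) \<le> lam0 + 1" using cmod_le[of "Complex (-lam0) 1"] l0 by simp
      then have "\<tau> * cmod (Complex (-lam0) 1) \<le> \<tau> * (lam0 + 1)" using tp by (intro mult_left_mono) auto
      then have "cmod (of_real \<tau> * Complex (-lam0) 1) < \<rho>" using tp \<rho> by (simp add: norm_mult)
      then have "zs \<in> ball b \<rho>" unfolding zs_def by (simp add: dist_norm)
      moreover have "Im (cnj E * (zs - b)) = \<tau> * (Re E + lam0 * Im E)" unfolding zs_def by (simp add: algebra_simps)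
      moreover have "Re E + lam0 * Im E < 0" using l0 by (simp add: abs_if)
      moreover have "\<tau> * (Re E + lam0 * Im E) < 0" using tp calculation(3) by (simp add: mult_pos_neg)
      ultimately have "zs \<in> ball b \<rho>" "Im (cnj E * (zs - b)) < 0" by linarith+
      then show ?thesis unfolding U_def by blast
    qed
    have wzs: "winding_number \<Gamma> zs = 0"
    proof (rule winding_number_zero_outside[OF \<Gamma>p(1) convex_halfspace_Im_le \<Gamma>p(2), of _ M])
      show "zs \<notin> {x. Im x \<le> M}" unfolding zs_def using tp bM by simp
      have "segs ks \<subseteq> {x. Im x \<le> M}" using KF(4) Mpos unfolding ks_def by force
      then show "path_image \<Gamma> \<subseteq> {x. Im x \<le> M}" using img\<Gamma> segM by blast
    qed
    have "winding_number \<Gamma> z2 = winding_number \<Gamma> zs"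
      by (rule winding_number_eq[OF \<Gamma>p(1,2) z2U zsU convex_connected[OF cU] UG])
    then have "winding_number \<Gamma> z1 = 1" using ec(1) wzs by simp
    moreover have "z1 \<notin> path_image \<Gamma>" using ec(2) img\<Gamma> segsvs unfolding Rest_def Rest0_def by blast
    ultimately show ?thesis by blast
  qed
  have bot: "\<exists>z. z \<notin> path_image \<Gamma> \<and> winding_number \<Gamma> z = -1"
  proof -
    have ap: "\<alpha> > 0" "\<beta> > 0" using KF by auto
    define e where "e = 1 / (4 * (1 + 2 * \<alpha>))"
    have ep: "e > 0" unfolding e_def using ap by simp
    have e4: "e * (1 + 2 * \<alpha>) = 1/4" unfolding e_def using ap by simp
    define X where "X = r2 + Complex (1/2) (-3*e) * (p2 - r2)"
    define ks' where "ks' = [1, r2, X, p2, 0]"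
    define \<Gamma>' where "\<Gamma>' = \<gamma> +++ polypath ks'"
    define Rest where "Rest = segs vs \<union> closed_segment 1 r2 \<union> closed_segment p2 0"
    have r2p2: "r2 \<noteq> p2" using ap by (simp add: r2_def p2_def complex_eq_iff)
    have \<Gamma>'p: "path \<Gamma>'" "pathfinish \<Gamma>' = pathstart \<Gamma>'" "path_image \<Gamma>' = segs vs \<union> segs ks'"
      unfolding \<Gamma>'_def ks'_def using \<gamma>p img\<gamma> pp_props[of "[1, r2, X, p2, 0]"] pp_image[of "[1, r2, X, p2, 0]"]
      by (auto simp: path_image_join)
    have segpt: "Re x = 1/2 \<and> Im x \<le> -\<beta> + 1/4"
      if xin: "x \<in> closed_segment (r2 + Complex (1/2) e * (p2 - r2)) (r2 + Complex (1/2) (-e) * (p2 - r2))" for x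
    proof -
      obtain t where t: "0 \<le> t" "t \<le> 1" "x = (r2 + Complex (1/2) e * (p2 - r2)) + of_real t * ((r2 + Complex (1/2) (-e) * (p2 - r2)) - (r2 + Complex (1/2) e * (p2 - r2)))"
        using seg_param[OF xin] by blast
      have "Re x = 1/2" "Im x = -\<beta> - e * (1 + 2 * \<alpha>) + 2 * t * (e * (1 + 2 * \<alpha>))"
        unfolding t(3) r2_def p2_def by (simp_all add: algebra_simps)
      then show ?thesis using t(2) unfolding e4 by simp
    qed
    have h1: "segs ([1] @ [r2]) \<union> segs (p2 # [0]) \<subseteq> Rest" unfolding Rest_def by auto
    have h2: "path_image \<Gamma>' \<subseteq> Rest \<union> segs ([1] @ r2 # (r2 + Complex (1/2) (- 3 * e) * (p2 - r2)) # p2 # [0])"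
        unfolding \<Gamma>'p(3) ks'_def X_def Rest_def by auto
    have h3: "closed_segment (r2 + Complex (1/2) e * (p2 - r2)) (r2 + Complex (1/2) (- e) * (p2 - r2)) \<inter> Rest = {}"
      proof -
        { fix x assume x: "x \<in> closed_segment (r2 + Complex (1/2) e * (p2 - r2)) (r2 + Complex (1/2) (- e) * (p2 - r2))"
          note sx = segpt[OF x]
          have "x \<notin> segs vs"
          proof
            assume "x \<in> segs vs"
            then have "x \<in> cball cc R" using \<gamma>ball by blast
            then have "-\<beta> + 1/2 < Im x" using KF(8) by blast
            then show False using sx by linarith
          qed
          moreover have "x \<notin> closed_segment 1 r2"
          proof
            assume "x \<in> closed_segment 1 r2"
            then have "1 \<le> Re x" using KF(5) by blast
            then show False using sx by linarith
          qed
          moreover have "x \<notin> closed_segment p2 0"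
          proof
            assume "x \<in> closed_segment p2 0"
            then have "Re x \<le> 0" using KF(6) by blast
            then show False using sx by linarith
          qed
          ultimately have "x \<notin> Rest" unfolding Rest_def by blast }
        then show ?thesis by blast
      qed
    have h4: "winding_number \<Gamma> z = wns vs z + wns ([1] @ r2 # p2 # [0]) z"
      if z: "z \<notin> Rest" "z \<notin> closed_segment r2 p2" for z
    proof -
      have "z \<notin> segs vs \<union> segs ks" using z unfolding Rest_def ks_def by auto
      then show ?thesis using wn\<Gamma> unfolding ks_def by simp
    qed
    have h5: "winding_number \<Gamma>' z = wns vs z + wns ([1] @ r2 # (r2 + Complex (1/2) (- 3 * e) * (p2 - r2)) # p2 # [0]) z"
      if z: "z \<notin> Rest" "z \<notin> closed_segment r2 (r2 + Complex (1/2) (- 3 * e) * (p2 - r2))"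
        "z \<notin> closed_segment (r2 + Complex (1/2) (- 3 * e) * (p2 - r2)) p2" for z
    proof -
      have zn: "z \<notin> segs vs" "z \<notin> segs ks'" using z unfolding Rest_def ks'_def X_def by auto
      have "winding_number \<Gamma>' z = winding_number \<gamma> z + winding_number (polypath ks') z"
        unfolding \<Gamma>'_def using zn \<gamma>p img\<gamma> pp_props[of ks'] pp_image[of ks'] unfolding ks'_def
        by (intro winding_number_join) auto
      then show ?thesis
        using pp_wn[of vs z] pp_wn[of ks' z] zn assms(5) unfolding \<gamma>_def ks'_def X_def by simp
    qed
    have s12: "(0::real) < 1/2" "(1/2::real) < 1" by auto
    note ec = edge_cross[OF \<Gamma>'p(1,2) r2p2 s12 ep h1 h2 h3 h4 h5]
    have w0: "winding_number \<Gamma> (r2 + Complex (1/2) e * (p2 - r2)) = 0"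
    proof (rule winding_number_zero_outside[OF \<Gamma>p(1) convex_halfspace_Im_ge \<Gamma>p(2), of _ "-\<beta>"])
      show "r2 + Complex (1/2) e * (p2 - r2) \<notin> {x. - \<beta> \<le> Im x}"
      proof -
        have "0 < \<alpha> * (e * 2)" using ep ap by simp
        then show ?thesis using ep unfolding r2_def p2_def by (simp add: algebra_simps)
      qed
      show "path_image \<Gamma> \<subseteq> {x. - \<beta> \<le> Im x}"
      proof
        fix x assume "x \<in> path_image \<Gamma>"
        then consider "x \<in> segs vs" | "x \<in> segs ks" using img\<Gamma> by blast
        then show "x \<in> {x. - \<beta> \<le> Im x}"
        proof cases
          case 1 then have "x \<in> cball cc R" using \<gamma>ball by blast
          then show ?thesis using KF(8) by force
        next
          case 2 then show ?thesis using KF(4) unfolding ks_def by force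
        qed
      qed
    qed
    have "r2 + Complex (1/2) (-e) * (p2 - r2) \<notin> path_image \<Gamma>"
      using ec(3) unfolding img\<Gamma> ks_def Rest_def by simp
    moreover have "winding_number \<Gamma> (r2 + Complex (1/2) (-e) * (p2 - r2)) = -1"
    proof -
      have "winding_number \<Gamma> (r2 + Complex (1/2) (-e) * (p2 - r2)) + 1 = 0" using ec(1) w0 by simp
      then show ?thesis by algebra
    qed
    ultimately show ?thesis by blast
  qed
  obtain z1 where z1: "z1 \<notin> path_image \<Gamma>" "winding_number \<Gamma> z1 = 1" using top by blast
  obtain z2 where z2: "z2 \<notin> path_image \<Gamma>" "winding_number \<Gamma> z2 = -1" using bot by blast
  have ins: "z \<in> inside (path_image \<Gamma>)" if "z \<notin> path_image \<Gamma>" "winding_number \<Gamma> z \<noteq> 0" for z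
  proof (rule ccontr)
    assume "z \<notin> inside (path_image \<Gamma>)"
    then have "z \<in> outside (path_image \<Gamma>)" using that(1) inside_Un_outside[of "path_image \<Gamma>"] by blast
    then show False using winding_number_zero_in_outside[OF \<Gamma>p] that(2) by blast
  qed
  have i1: "z1 \<in> inside (path_image \<Gamma>)" using ins z1 by simp
  have i2: "z2 \<in> inside (path_image \<Gamma>)" using ins z2 by simp
  show False
    by (rule simple_closed_path_winding_number_inside[OF simple]) (use i1 i2 z1 z2 in force)+
qed

lemma linepath_aff:
  assumes "\<And>a b t. f (a + of_real t * (b - a)) = f a + of_real t * (f b - f a)"
  shows "linepath (f a) (f b) = f \<circ> linepath a b"
proof
  fix x
  have "linepath a b x = a + of_real x * (b - a)" by (simp add: linepath_def scaleR_conv_of_real algebra_simps)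
  moreover have "linepath (f a) (f b) x = f a + of_real x * (f b - f a)" by (simp add: linepath_def scaleR_conv_of_real algebra_simps)
  ultimately show "linepath (f a) (f b) x = (f \<circ> linepath a b) x" using assms by simp
qed

lemma join_comp: "(f \<circ> g1) +++ (f \<circ> g2) = f \<circ> (g1 +++ g2)"
  by (auto simp: joinpaths_def)

lemma pp_map:
  assumes "\<And>a b t. f (a + of_real t * (b - a)) = f a + of_real t * (f b - f a)" "vs \<noteq> []"
  shows "polypath (map f vs) = f \<circ> polypath vs"
  using assms(2)
proof (induction vs rule: polypath.induct)
  case (2 a) then show ?case using linepath_aff[OF assms(1), of a a] by simp
next
  case (3 a b) then show ?case using linepath_aff[OF assms(1), of a b] by simp
next
  case (4 a b c rest)
  have "polypath (map f (b # c # rest)) = f \<circ> polypath (b # c # rest)" by (rule "4.IH") simp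
  moreover have "polypath (map f (a # b # c # rest)) = linepath (f a) (f b) +++ polypath (map f (b # c # rest))" by simp
  ultimately show ?case using linepath_aff[OF assms(1), of a b] join_comp[of f "linepath a b" "polypath (b # c # rest)"] by simp
qed auto

lemma transfer:
  fixes f :: "complex \<Rightarrow> complex" and k \<sigma> :: real
  assumes aff: "\<And>a b t. f (a + of_real t * (b - a)) = f a + of_real t * (f b - f a)"
    and fd: "\<And>x y. dist (f x) (f y) = k * dist x y" "k > 0"
    and fo: "\<And>a b c. orient (f a) (f b) (f c) = \<sigma> * orient a b c"
    and fp: "f p = 0" "f r = 1"
    and "R > 0"
    and "p \<in> sphere c R" and "r \<in> sphere c R"
    and "q \<in> ball c R"
    and "length vs \<ge> 2" and "hd vs = p" and "last vs = r"
    and "arc (polypath vs)"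
    and "q \<in> path_image (polypath vs)"
    and "path_image (polypath vs) \<inter> sphere c R = {p, r}"
    and o1: "\<sigma> * orient p q r < 0"
    and o2: "\<And>i. 0 < i \<Longrightarrow> i < length vs - 1 \<Longrightarrow> \<sigma> * orient (vs ! (i - 1)) (vs ! i) (vs ! (i + 1)) \<ge> 0"
  shows False
proof -
  have vsne: "vs \<noteq> []" using assms(11) by auto
  have injf: "inj f"
  proof (rule injI)
    fix x y assume "f x = f y"
    then have "k * dist x y = 0" using fd(1)[of x y] by simp
    then show "x = y" using fd(2) by simp
  qed
  have contf: "continuous_on UNIV f"
  proof (rule continuous_on_iff[THEN iffD2], intro ballI allI impI)
    fix x :: complex and e :: real assume "e > 0"
    show "\<exists>d>0. \<forall>x'\<in>UNIV. dist x' x < d \<longrightarrow> dist (f x') (f x) < e"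
      by (rule exI[of _ "e / k"]) (use \<open>e > 0\<close> fd in \<open>auto simp: field_simps\<close>)
  qed
  have ppm: "polypath (map f vs) = f \<circ> polypath vs" by (rule pp_map[OF aff vsne])
  have sph: "f x \<in> sphere (f c) (k * R) \<longleftrightarrow> x \<in> sphere c R" for x using fd by simp
  have bal: "f x \<in> ball (f c) (k * R) \<longleftrightarrow> x \<in> ball c R" for x using fd by simp
  have arcm: "arc (polypath (map f vs))"
  proof -
    have "path (f \<circ> polypath vs)"
      using assms(14) contf by (intro path_continuous_image) (auto simp: arc_imp_path intro: continuous_on_subset)
    moreover have "inj_on (f \<circ> polypath vs) {0..1}"
      using assms(14) injf by (auto simp: arc_def intro: comp_inj_on inj_on_subset)
    ultimately show ?thesis unfolding ppm arc_def by simp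
  qed
  have imgm: "path_image (polypath (map f vs)) = f ` path_image (polypath vs)"
    unfolding ppm by (simp add: path_image_compose)
  show False
  proof (rule main_norm[of "k * R" "f c" "f q" "map f vs"])
    show "0 < k * R" using fd(2) assms(7) by simp
    show "0 \<in> sphere (f c) (k * R)" using sph[of p] assms(8) fp by simp
    show "1 \<in> sphere (f c) (k * R)" using sph[of r] assms(9) fp by simp
    show "f q \<in> ball (f c) (k * R)" using bal[of q] assms(10) by simp
    show "2 \<le> length (map f vs)" using assms(11) by simp
    show "hd (map f vs) = 0" using vsne assms(12) fp by (simp add: hd_map)
    show "last (map f vs) = 1" using vsne assms(13) fp by (simp add: last_map)
    show "arc (polypath (map f vs))" by (fact arcm)
    show "f q \<in> path_image (polypath (map f vs))" using assms(15) imgm by simp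
    show "path_image (polypath (map f vs)) \<inter> sphere (f c) (k * R) = {0, 1}"
    proof
      show "path_image (polypath (map f vs)) \<inter> sphere (f c) (k * R) \<subseteq> {0, 1}"
      proof
        fix x assume "x \<in> path_image (polypath (map f vs)) \<inter> sphere (f c) (k * R)"
        then obtain y where y: "y \<in> path_image (polypath vs)" "x = f y" "f y \<in> sphere (f c) (k * R)"
          using imgm by auto
        then have "y \<in> {p, r}" using sph assms(16) by blast
        then show "x \<in> {0, 1}" using y fp by auto
      qed
      have "p \<in> path_image (polypath vs)" "r \<in> path_image (polypath vs)" using assms(16) by auto
      moreover have "f p \<in> sphere (f c) (k * R)" "f r \<in> sphere (f c) (k * R)" using sph assms(8,9) by blast+
      ultimately show "{0, 1} \<subseteq> path_image (polypath (map f vs)) \<inter> sphere (f c) (k * R)"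
        using imgm fp by force
    qed
    show "0 < Im (f q)"
    proof -
      have "orient (f p) (f q) (f r) = - Im (f q)" using fp by (simp add: orient_def)
      then show ?thesis using fo[of p q r] o1 by simp
    qed
    fix i assume i: "0 < i" "i < length (map f vs) - 1"
    have "orient (map f vs ! (i - 1)) (map f vs ! i) (map f vs ! (i + 1)) = \<sigma> * orient (vs ! (i - 1)) (vs ! i) (vs ! (i + 1))"
      using i fo by simp
    then show "0 \<le> orient (map f vs ! (i - 1)) (map f vs ! i) (map f vs ! (i + 1))" using o2[of i] i by simp
  qed
qed

lemma orient_scale:
  "orient ((a - p) * w) ((b - p) * w) ((c - p) * w) = (cmod w)^2 * orient a b c"
proof -
  have "cnj ((b - p) * w - (a - p) * w) * ((c - p) * w - (a - p) * w) = (cnj (b - a) * (c - a)) * (w * cnj w)"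
    by (simp add: algebra_simps)
  also have "w * cnj w = of_real ((cmod w)^2)" using complex_norm_square[of w] by simp
  finally show ?thesis unfolding orient_def by (simp only:) (simp add: mult.commute)
qed

lemma orient_cnj: "orient (cnj a) (cnj b) (cnj c) = - orient a b c"
  unfolding orient_def by (simp add: algebra_simps)

theorem lemma10:
  fixes c p q r :: complex and R :: real and vs :: "complex list"
  assumes "R > 0"
    and "p \<in> sphere c R" and "r \<in> sphere c R"
    and "q \<in> ball c R"
    and "length vs \<ge> 2" and "hd vs = p" and "last vs = r"
    and "arc (polypath vs)"
    and "q \<in> path_image (polypath vs)"
    and "path_image (polypath vs) \<inter> sphere c R = {p, r}"
  shows "(orient p q r < 0 \<longrightarrow>
            (\<exists>i. 0 < i \<and> i < length vs - 1 \<and> orient (vs ! (i - 1)) (vs ! i) (vs ! (i + 1)) < 0))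
       \<and> (orient p q r > 0 \<longrightarrow>
            (\<exists>i. 0 < i \<and> i < length vs - 1 \<and> orient (vs ! (i - 1)) (vs ! i) (vs ! (i + 1)) > 0))"
proof -
  have vsne: "vs \<noteq> []" using assms(5) by auto
  have "pathfinish (polypath vs) \<noteq> pathstart (polypath vs)" using arc_distinct_ends[OF assms(8)] .
  then have pr: "r \<noteq> p" using pp_props[OF vsne] assms(6,7) by simp
  define w where "w = inverse (r - p)"
  have w0: "w \<noteq> 0" "(r - p) * w = 1" using pr unfolding w_def by auto
  have wpos: "cmod w > 0" using w0 by simp
  define f1 where "f1 = (\<lambda>z. (z - p) * w)"
  define f2 where "f2 = (\<lambda>z. cnj ((z - p) * w))"
  have aff1: "\<And>a b t. f1 (a + of_real t * (b - a)) = f1 a + of_real t * (f1 b - f1 a)"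
    unfolding f1_def by (simp add: algebra_simps)
  have aff2: "\<And>a b t. f2 (a + of_real t * (b - a)) = f2 a + of_real t * (f2 b - f2 a)"
    unfolding f2_def by (simp add: algebra_simps)
  have e1: "\<And>x y. (x - p) * w - (y - p) * w = (x - y) * w" by (simp add: algebra_simps)
  have d1: "\<And>x y. dist (f1 x) (f1 y) = cmod w * dist x y"
    unfolding f1_def dist_norm e1 by (simp add: norm_mult)
  have d2: "\<And>x y. dist (f2 x) (f2 y) = cmod w * dist x y"
  proof -
    fix x y
    have "dist (f2 x) (f2 y) = cmod (cnj ((x - p) * w - (y - p) * w))" unfolding f2_def dist_norm by simp
    also have "\<dots> = cmod w * dist x y" unfolding complex_mod_cnj dist_norm e1
      by (simp add: norm_mult)
    finally show "dist (f2 x) (f2 y) = cmod w * dist x y" .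
  qed
  have o1: "\<And>a b c. orient (f1 a) (f1 b) (f1 c) = (cmod w)^2 * orient a b c"
    unfolding f1_def by (rule orient_scale)
  have o2: "\<And>a b c. orient (f2 a) (f2 b) (f2 c) = (- ((cmod w)^2)) * orient a b c"
    unfolding f2_def orient_cnj orient_scale by simp
  have fp: "f1 p = 0" "f1 r = 1" "f2 p = 0" "f2 r = 1" unfolding f1_def f2_def using w0 by auto
  show ?thesis
  proof (intro conjI impI)
    assume neg: "orient p q r < 0"
    show "\<exists>i. 0 < i \<and> i < length vs - 1 \<and> orient (vs ! (i - 1)) (vs ! i) (vs ! (i + 1)) < 0"
    proof (rule ccontr)
      assume nt: "\<not> ?thesis"
      have all: "(cmod w)^2 * orient (vs ! (i - 1)) (vs ! i) (vs ! (i + 1)) \<ge> 0"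
        if "0 < i" "i < length vs - 1" for i
      proof -
        have "0 \<le> orient (vs ! (i - 1)) (vs ! i) (vs ! (i + 1))" using nt that by (meson not_less)
        then show ?thesis by simp
      qed
      show False
        by (rule transfer[OF aff1 d1 wpos o1 fp(1,2) assms _ all]) (use neg wpos in \<open>simp add: mult_pos_neg\<close>)
    qed
  next
    assume pos: "orient p q r > 0"
    show "\<exists>i. 0 < i \<and> i < length vs - 1 \<and> orient (vs ! (i - 1)) (vs ! i) (vs ! (i + 1)) > 0"
    proof (rule ccontr)
      assume nt: "\<not> ?thesis"
      have all: "(- ((cmod w)^2)) * orient (vs ! (i - 1)) (vs ! i) (vs ! (i + 1)) \<ge> 0"
        if "0 < i" "i < length vs - 1" for i
      proof -
        have "orient (vs ! (i - 1)) (vs ! i) (vs ! (i + 1)) \<le> 0" using nt that by (meson not_less)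
        then show ?thesis by (simp add: mult_nonneg_nonpos)
      qed
      show False
        by (rule transfer[OF aff2 d2 wpos o2 fp(3,4) assms _ all]) (use pos wpos in \<open>simp add: mult_pos_pos\<close>)
    qed
  qed
qed

end
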